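(* For every nonzero limit ordinal $\alpha$, the structure $\mathrm{WS}(\omega^\alpha,<,\psi)$ is interpretable in $\mathrm{HF}(\alpha,<)$.
   Context: $\psi$ on ordinals: $\psi(0)=\omega$; if $\beta=\omega^{\beta_1}+\dots+\omega^{\beta_n}$ in Cantor normal form ($n\ge1$, $\beta_1\ge\dots\ge\beta_n$), $\psi(\beta)=\omega^{\beta_1}+\dots+\omega^{\beta_{n-1}}+\omega^{\beta_n+1}$. $(\gamma,<,\psi)$ is the structure on the ordinals below $\gamma$ with the usual order and $\psi$ (restricted). For a structure $\mathfrak{A}$ with domain $X$, $\mathrm{WS}(\mathfrak{A})$ is the two-sorted structure consisting of $\mathfrak{A}$ plus a second sort of all finite subsets of $X$ with the membership relation. For a relational structure $\mathfrak{A}$ with domain $A$, $\mathrm{HF}(\mathfrak{A})$ has domain $A^+$, the least set with $A\times\{\omega\}\subseteq A^+$ and every finite subset of $A^+$ belonging to $A^+$ (pairs in the Kuratowski sense, ordinals von Neumann); atoms are the elements $\pi(a)=(a,\omega)$, $a\in A$; its signature is that of $\mathfrak{A}$ (each relation holding exactly on tuples of atoms $\pi(a_1),\dots,\pi(a_n)$ with $\mathfrak{A}\models P(a_1,\dots,a_n)$) plus a unary predicate $\mathrm{At}$ true exactly of atoms and a binary $\in$ with $x\in y$ iff $y$ is not an atom and $x$ is a set-theoretic element of $y$. A many-sorted structure $\mathfrak{M}$ is interpretable in $\mathfrak{N}$ if each sort of $\mathfrak{M}$ is assigned a sort of $\mathfrak{N}$ and an injection of the domain into it, such that the image of each domain and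 the image of each relation and of the graph of each function of $\mathfrak{M}$ is first-order definable in $\mathfrak{N}$. *)

theory Defs
  imports Main "HOL-Library.FSet"
begin

text \<open>The ordinal alpha is the order type of a well-ordered HOL type 'a.
  An ordinal beta < omega^alpha is represented by the list [beta_1,...,beta_n] of
  exponents (elements of 'a, i.e. ordinals < alpha) of its Cantor normal form
  omega^beta_1 + ... + omega^beta_n, with beta_1 >= ... >= beta_n; the empty list is 0.\<close>

definition cnf :: "'a::linorder list \<Rightarrow> bool" where
  "cnf xs \<longleftrightarrow> sorted_wrt (\<lambda>x y. y \<le> x) xs"

definition omega_pow :: "'a::linorder list set" where
  "omega_pow = {xs. cnf xs}"

text \<open>Ordinal order on Cantor normal forms: lexicographic, a proper prefix being smaller.\<close>
definition cnf_less :: "'a::linorder list \<Rightarrow> 'a list \<Rightarrow> bool" where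
  "cnf_less xs ys \<longleftrightarrow> (xs, ys) \<in> lexord {(a, b). a < b}"

definition osucc :: "'a::wellorder \<Rightarrow> 'a" where
  "osucc b = (LEAST c. b < c)"

definition ozero :: "'a::wellorder" where
  "ozero = (LEAST c. True)"

text \<open>Ordinal sum of two Cantor normal forms: the terms of the first summand that are
  smaller than the leading term of the second one are absorbed.\<close>
definition cnf_plus :: "'a::linorder list \<Rightarrow> 'a list \<Rightarrow> 'a list" where
  "cnf_plus xs ys = (case ys of [] \<Rightarrow> xs | y # _ \<Rightarrow> filter (\<lambda>c. y \<le> c) xs @ ys)"

text \<open>psi(0) = omega = omega^1;
  psi(omega^b1+...+omega^bn) = omega^b1+...+omega^b(n-1) + omega^(bn+1) (ordinal sum).\<close>
definition psi :: "'a::wellorder list \<Rightarrow> 'a list" where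
  "psi xs = (if xs = [] then [osucc ozero]
             else cnf_plus (butlast xs) [osucc (last xs)])"

datatype 'a hf = Atom 'a | HSet "'a hf fset"

fun hf_mem :: "'a hf \<Rightarrow> 'a hf \<Rightarrow> bool" where
  "hf_mem x (Atom a) = False"
| "hf_mem x (HSet s) = (x |\<in>| s)"

fun hf_at :: "'a hf \<Rightarrow> bool" where
  "hf_at (Atom a) = True"
| "hf_at (HSet s) = False"

fun hf_less :: "'a::ord hf \<Rightarrow> 'a hf \<Rightarrow> bool" where
  "hf_less (Atom a) (Atom b) = (a < b)"
| "hf_less _ _ = False"

datatype hf_fm =
    FLess nat nat | FAt nat | FMem nat nat | FEq nat nat
  | FNeg hf_fm | FConj hf_fm hf_fm | FEx nat hf_fm

fun hf_sat :: "(nat \<Rightarrow> 'a::ord hf) \<Rightarrow> hf_fm \<Rightarrow> bool" where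
  "hf_sat e (FLess i j) = hf_less (e i) (e j)"
| "hf_sat e (FAt i) = hf_at (e i)"
| "hf_sat e (FMem i j) = hf_mem (e i) (e j)"
| "hf_sat e (FEq i j) = (e i = e j)"
| "hf_sat e (FNeg \<phi>) = (\<not> hf_sat e \<phi>)"
| "hf_sat e (FConj \<phi> \<psi>) = (hf_sat e \<phi> \<and> hf_sat e \<psi>)"
| "hf_sat e (FEx v \<phi>) = (\<exists>x. hf_sat (e(v := x)) \<phi>)"

definition hf_definable :: "nat \<Rightarrow> 'a::ord hf list set \<Rightarrow> bool" where
  "hf_definable k R \<longleftrightarrow> (\<exists>\<phi>. \<forall>e. hf_sat e \<phi> \<longleftrightarrow> map e [0..<k] \<in> R)"

definition WS_psi_interpretable_in_HF :: "'a::wellorder itself \<Rightarrow> bool" where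
  "WS_psi_interpretable_in_HF _ \<longleftrightarrow>
    (\<exists>(f :: 'a list \<Rightarrow> 'a hf) (g :: 'a list set \<Rightarrow> 'a hf).
       inj_on f omega_pow \<and>
       inj_on g {S. finite S \<and> S \<subseteq> omega_pow} \<and>
       hf_definable 1 {[f x] | x. x \<in> omega_pow} \<and>
       hf_definable 1 {[g S] | S. finite S \<and> S \<subseteq> omega_pow} \<and>
       hf_definable 2 {[f x, f y] | x y. x \<in> omega_pow \<and> y \<in> omega_pow \<and> cnf_less x y} \<and>
       hf_definable 2 {[f x, f (psi x)] | x. x \<in> omega_pow} \<and>
       hf_definable 2 {[f x, g S] | x S. finite S \<and> S \<subseteq> omega_pow \<and> x \<in> S})"

end

theory Submission
  imports Defs "HOL-Library.Multiset_Order"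
begin

lemma cnf_sorted_rev: "cnf xs \<longleftrightarrow> sorted (rev xs)"
  by (simp add: cnf_def sorted_wrt_rev)

lemma cnf_mset_inj: "cnf xs \<Longrightarrow> cnf ys \<Longrightarrow> mset xs = mset ys \<Longrightarrow> xs = ys"
proof -
  assume a: "cnf xs" "cnf ys" "mset xs = mset ys"
  have "sort (rev ys) = rev xs" using a by (intro properties_for_sort) (auto simp: cnf_sorted_rev)
  moreover have "sort (rev ys) = rev ys" using a by (simp add: cnf_sorted_rev sorted_sort_id)
  ultimately show ?thesis by simp
qed

lemma cnf_exists: "\<exists>xs. cnf xs \<and> mset xs = M"
  by (rule exI[of _ "rev (sorted_list_of_multiset M)"]) (simp add: cnf_sorted_rev)

lemma cnf_le_head: "cnf (a # v) \<Longrightarrow> x \<in> set v \<Longrightarrow> x \<le> a"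
  by (simp add: cnf_def)

lemma cnt0: "x \<notin> set v \<Longrightarrow> count (mset v) x = 0"
  by (simp add: count_eq_zero_iff)

lemma cnf_less_mset:
  assumes "cnf xs" "cnf ys" "cnf_less xs ys" shows "mset xs < mset ys"
proof -
  from assms(3) have "(\<exists>a v. ys = xs @ a # v) \<or> (\<exists>u a b v w. a < b \<and> xs = u @ a # v \<and> ys = u @ b # w)"
    by (simp add: cnf_less_def lexord_def)
  then show ?thesis
  proof
    assume "\<exists>a v. ys = xs @ a # v"
    then obtain a v where ys: "ys = xs @ a # v" by blast
    show ?thesis unfolding less_multiset\<^sub>H\<^sub>O using ys by auto
  next
    assume "\<exists>u a b v w. a < b \<and> xs = u @ a # v \<and> ys = u @ b # w"
    then obtain u a b v w where ab: "a < b" and xs: "xs = u @ a # v" and ys: "ys = u @ b # w" by blast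
    have cav: "cnf (a # v)" using assms(1) xs by (simp add: cnf_def sorted_wrt_append)
    have bnot: "b \<notin> set (a # v)" using cnf_le_head[OF cav] ab by fastforce
    have v0: "count (mset v) b = 0" using bnot by (simp add: count_eq_zero_iff)
    have cb: "count (mset xs) b < count (mset ys) b" unfolding xs ys using bnot by (simp only: mset_append mset.simps count_union count_add_mset v0) auto
    show ?thesis unfolding less_multiset\<^sub>H\<^sub>O
    proof (intro conjI allI impI)
      show "mset xs \<noteq> mset ys" using cb by auto
      fix y assume "count (mset ys) y < count (mset xs) y"
      then have "y \<in> set (a # v)" using xs ys
        by (cases "y \<in> set (a # v)") (auto simp: cnt0 split: if_splits)
      then have "y < b" using cnf_le_head[OF cav] ab by fastforce
      then show "\<exists>x>y. count (mset xs) x < count (mset ys) x"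
        using cb by (rule_tac x=b in exI) simp
    qed
  qed
qed

lemma cnf_less_iff:
  assumes "cnf xs" "cnf ys" shows "cnf_less xs ys \<longleftrightarrow> mset xs < mset ys"
proof
  assume "cnf_less xs ys" then show "mset xs < mset ys" using cnf_less_mset assms by blast
next
  assume m: "mset xs < mset ys"
  show "cnf_less xs ys"
  proof (rule ccontr)
    assume n: "\<not> cnf_less xs ys"
    have tot: "xs = ys \<or> cnf_less xs ys \<or> cnf_less ys xs"
    proof -
      have "(xs, ys) \<in> lexord {(a, b). a < b} \<or> xs = ys \<or> (ys, xs) \<in> lexord {(a, b). a < b}"
        by (rule lexord_linear) auto
      then show ?thesis unfolding cnf_less_def by blast
    qed
    then show False using n m cnf_less_mset[OF assms(2,1)] by auto
  qed
qed

fun tok :: "'a \<Rightarrow> nat \<Rightarrow> 'a hf" where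
  "tok a 0 = HSet {|Atom a|}"
| "tok a (Suc i) = HSet {|Atom a, tok a i|}"

lemma tok_not_atom[simp]: "hf_at (tok a i) = False"
  by (cases i) auto

lemma tok_ne_Atom[simp]: "tok a i \<noteq> Atom b" "Atom b \<noteq> tok a i"
  by (cases i; simp)+

lemma mem_tok: "hf_mem u (tok a i) \<longleftrightarrow> u = Atom a \<or> (0 < i \<and> u = tok a (i - 1))"
  by (cases i) auto

lemma tok_inj[simp]: "tok a i = tok b j \<longleftrightarrow> a = b \<and> i = j"
proof
  assume e: "tok a i = tok b j"
  have ab: "a = b" using mem_tok[of "Atom a" b j] e[symmetric] mem_tok[of "Atom a" a i] by simp
  have "i = j" using e unfolding ab
  proof (induction i arbitrary: j)
    case 0 then show ?case
      using mem_tok[of "tok b (j - 1)" b 0] mem_tok[of "tok b (j - 1)" b j] by (cases j) auto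
  next
    case (Suc i)
    have "hf_mem (tok b i) (tok b j)" using Suc.prems[symmetric] mem_tok[of "tok b i" b "Suc i"] by simp
    then have "0 < j \<and> tok b i = tok b (j - 1)" using mem_tok[of "tok b i" b j] by simp
    then show ?case using Suc.IH by fastforce
  qed
  then show "a = b \<and> i = j" using ab by simp
qed simp

lemma hf_less_iff: "hf_less x y \<longleftrightarrow> (\<exists>a b. x = Atom a \<and> y = Atom b \<and> a < b)"
  by (cases x; cases y) auto

lemma hf_at_iff: "hf_at x \<longleftrightarrow> (\<exists>a. x = Atom a)"
  by (cases x) auto

definition toks :: "'a multiset \<Rightarrow> 'a hf set" where
  "toks M = {tok a i | a i. i < count M a}"

lemma finite_toks: "finite (toks M)"
proof -
  have "toks M \<subseteq> (\<lambda>(a, i). tok a i) ` (set_mset M \<times> {..<size M})"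
    unfolding toks_def
  proof clarify
    fix a i assume i: "i < count M a"
    then have "a \<in># M" by (metis count_inI less_nat_zero_code)
    moreover have "i < size M" using i count_le_size[of M a] by simp
    ultimately show "tok a i \<in> (\<lambda>(a, i). tok a i) ` (set_mset M \<times> {..<size M})" by force
  qed
  then show ?thesis by (rule finite_subset) simp
qed

definition enc :: "'a multiset \<Rightarrow> 'a hf" where
  "enc M = HSet (Abs_fset (toks M))"

lemma mem_enc: "hf_mem z (enc M) \<longleftrightarrow> (\<exists>a i. z = tok a i \<and> i < count M a)"
  by (simp add: enc_def Abs_fset_inverse finite_toks) (auto simp: toks_def)

lemma tok_mem_enc[simp]: "hf_mem (tok a i) (enc M) \<longleftrightarrow> i < count M a"
  by (simp add: mem_enc)

lemma enc_not_atom[simp]: "hf_at (enc M) = False"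
  by (simp add: enc_def)

lemma enc_inj: "enc M = enc N \<Longrightarrow> M = N"
proof (rule multiset_eqI)
  fix a assume e: "enc M = enc N"
  have "i < count M a \<longleftrightarrow> i < count N a" for i
    using tok_mem_enc[of a i M] tok_mem_enc[of a i N] e by simp
  then show "count M a = count N a"
    by (metis less_irrefl nat_neq_iff)
qed

lemma hf_ext: "\<not> hf_at X \<Longrightarrow> \<not> hf_at Y \<Longrightarrow> (\<And>z. hf_mem z X \<longleftrightarrow> hf_mem z Y) \<Longrightarrow> X = Y"
proof (cases X; cases Y)
  fix s t assume "X = HSet s" "Y = HSet t" "\<And>z. hf_mem z X \<longleftrightarrow> hf_mem z Y"
  then show "X = Y" by (simp add: fset_eqI)
qed auto

definition valid :: "'a hf \<Rightarrow> bool" where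
  "valid X \<longleftrightarrow> \<not> hf_at X \<and> (\<forall>t. hf_mem t X \<longrightarrow>
    \<not> hf_at t \<and> (\<exists>a. hf_mem a t \<and> hf_at a) \<and>
    (\<forall>a b. hf_mem a t \<and> hf_at a \<and> hf_mem b t \<and> hf_at b \<longrightarrow> a = b) \<and>
    (\<forall>u w. hf_mem u t \<and> \<not> hf_at u \<and> hf_mem w t \<and> \<not> hf_at w \<longrightarrow> u = w) \<and>
    (\<forall>u. hf_mem u t \<and> \<not> hf_at u \<longrightarrow> hf_mem u X \<and> (\<forall>a. hf_mem a t \<and> hf_at a \<longrightarrow> hf_mem a u)))"

lemma valid_tok_prop: "i < count M a \<Longrightarrow> t = tok a i \<Longrightarrow>
    \<not> hf_at t \<and> (\<exists>a. hf_mem a t \<and> hf_at a) \<and>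
    (\<forall>a b. hf_mem a t \<and> hf_at a \<and> hf_mem b t \<and> hf_at b \<longrightarrow> a = b) \<and>
    (\<forall>u w. hf_mem u t \<and> \<not> hf_at u \<and> hf_mem w t \<and> \<not> hf_at w \<longrightarrow> u = w) \<and>
    (\<forall>u. hf_mem u t \<and> \<not> hf_at u \<longrightarrow> hf_mem u (enc M) \<and> (\<forall>a. hf_mem a t \<and> hf_at a \<longrightarrow> hf_mem a u))"
  by (auto simp: mem_tok)

lemma valid_enc: "valid (enc M)"
  unfolding valid_def
  apply (rule conjI, simp, rule allI, rule impI)
  apply (unfold mem_enc)
  apply (elim exE conjE)
  apply (rule valid_tok_prop[unfolded mem_enc]; assumption)
  done

lemma valid_tok: "valid X \<Longrightarrow> hf_mem t X \<Longrightarrow> \<exists>a i. t = tok a i"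
proof (induction t rule: hf.induct)
  case (Atom a)
  have "\<not> hf_at (Atom a)" using Atom.prems unfolding valid_def by blast
  then show ?case by simp
next
  case (HSet s)
  note V = HSet.prems(1)[unfolded valid_def, THEN conjunct2, rule_format, OF HSet.prems(2)]
  from V obtain x where x: "hf_mem x (HSet s)" "hf_at x" by blast
  then obtain a where xa: "x = Atom a" by (auto simp: hf_at_iff)
  have atoms: "\<And>y. y |\<in>| s \<Longrightarrow> hf_at y \<Longrightarrow> y = Atom a" using V x xa by auto
  show ?case
  proof (cases "\<exists>u. u |\<in>| s \<and> \<not> hf_at u")
    case True
    then obtain u where u: "u |\<in>| s" "\<not> hf_at u" by blast
    have uX: "hf_mem u X" and au: "hf_mem (Atom a) u" using V u x xa by auto
    obtain b j where ubj: "u = tok b j" using HSet.IH[OF u(1) HSet.prems(1) uX] by blast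
    have ba: "b = a" using au ubj by (auto simp: mem_tok)
    have nonat: "\<And>w. w |\<in>| s \<Longrightarrow> \<not> hf_at w \<Longrightarrow> w = u" using V u by auto
    have "s = {|Atom a, tok a j|}"
    proof (rule fset_eqI)
      fix y show "y |\<in>| s \<longleftrightarrow> y |\<in>| {|Atom a, tok a j|}"
      proof
        assume y: "y |\<in>| s"
        show "y |\<in>| {|Atom a, tok a j|}"
        proof (cases "hf_at y")
          case True then show ?thesis using atoms[OF y] by simp
        next
          case False then show ?thesis using nonat[OF y] ubj ba by simp
        qed
      next
        assume "y |\<in>| {|Atom a, tok a j|}"
        then have "y = Atom a \<or> y = tok a j" by simp
        moreover have "Atom a |\<in>| s" using x xa by simp
        ultimately show "y |\<in>| s" using u ubj ba by auto
      qed
    qed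
    then show ?thesis by (intro exI[of _ a] exI[of _ "Suc j"]) simp
  next
    case False
    have "s = {|Atom a|}"
    proof (rule fset_eqI)
      fix y show "y |\<in>| s \<longleftrightarrow> y |\<in>| {|Atom a|}"
      proof
        assume y: "y |\<in>| s"
        then have "hf_at y" using False by blast
        then show "y |\<in>| {|Atom a|}" using atoms[OF y] by simp
      next
        assume "y |\<in>| {|Atom a|}"
        then show "y |\<in>| s" using x xa by simp
      qed
    qed
    then show ?thesis by (intro exI[of _ a] exI[of _ 0]) simp
  qed
qed

lemma valid_down: "valid X \<Longrightarrow> hf_mem (tok a (Suc i)) X \<Longrightarrow> hf_mem (tok a i) X"
  unfolding valid_def by (metis hf_mem.simps(2) finsert_iff tok.simps(2) tok_not_atom)

lemma valid_down2: "valid X \<Longrightarrow> hf_mem (tok a i) X \<Longrightarrow> j \<le> i \<Longrightarrow> hf_mem (tok a j) X"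
proof (induction i)
  case 0 then show ?case by simp
next
  case (Suc i)
  show ?case
  proof (cases "j = Suc i")
    case True then show ?thesis using Suc.prems by simp
  next
    case False
    then have "j \<le> i" using Suc.prems(3) by simp
    then show ?thesis using Suc.IH[OF Suc.prems(1) valid_down[OF Suc.prems(1,2)]] by simp
  qed
qed

lemma down_card: "finite D \<Longrightarrow> (\<And>i j. i \<in> D \<Longrightarrow> j \<le> i \<Longrightarrow> j \<in> D) \<Longrightarrow> i \<in> D \<longleftrightarrow> i < card D"
proof
  assume f: "finite D" and d: "\<And>i j. i \<in> D \<Longrightarrow> j \<le> i \<Longrightarrow> j \<in> D"
  { assume "i \<in> D"
    then have "{..i} \<subseteq> D" using d by auto
    then have "card {..i} \<le> card D" using f card_mono by blast
    then show "i < card D" by simp }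
  { assume "i < card D"
    show "i \<in> D"
    proof (rule ccontr)
      assume "i \<notin> D"
      then have "D \<subseteq> {..<i}" using d by (meson not_le subsetI lessThan_iff)
      then have "card D \<le> i" using card_mono[of "{..<i}" D] by simp
      then show False using \<open>i < card D\<close> by simp
    qed }
qed

lemma valid_iff: "valid X \<longleftrightarrow> (\<exists>M. X = enc M)"
proof
  assume "\<exists>M. X = enc M" then show "valid X" using valid_enc by blast
next
  assume V: "valid X"
  then obtain s where Xs: "X = HSet s" by (cases X) (auto simp: valid_def)
  define D where "D a = {i. hf_mem (tok a i) X}" for a
  have fD: "finite (D a)" for a
  proof -
    have "D a = tok a -` fset s" by (auto simp: D_def Xs)
    moreover have "inj (tok a)" by (auto simp: inj_def)
    ultimately show ?thesis by (simp add: finite_vimageI)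
  qed
  have dD: "i \<in> D a \<longleftrightarrow> i < card (D a)" for a i
    by (rule down_card[OF fD]) (auto simp: D_def intro: valid_down2[OF V])
  define c where "c a = card (D a)" for a
  have fc: "finite {a. 0 < c a}"
  proof -
    have "{a. 0 < c a} \<subseteq> (\<lambda>a. tok a 0) -` fset s"
    proof
      fix a assume "a \<in> {a. 0 < c a}"
      then have "0 \<in> D a" using dD[of 0 a] by (simp add: c_def)
      then show "a \<in> (\<lambda>a. tok a 0) -` fset s" by (simp add: D_def Xs)
    qed
    moreover have "inj (\<lambda>a. tok a 0)" by (auto simp: inj_def)
    ultimately show ?thesis using finite_subset finite_vimageI[OF finite_fset] by blast
  qed
  define M where "M = Abs_multiset c"
  have cM: "count M = c" using count_Abs_multiset[OF fc] by (simp add: M_def)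
  have "X = enc M"
  proof (rule hf_ext)
    show "\<not> hf_at X" using V by (simp add: valid_def)
    show "\<not> hf_at (enc M)" by simp
    fix z show "hf_mem z X \<longleftrightarrow> hf_mem z (enc M)"
    proof
      assume z: "hf_mem z X"
      then obtain a i where "z = tok a i" using valid_tok[OF V] by blast
      then show "hf_mem z (enc M)" using z dD[of i a] by (simp add: cM c_def D_def)
    next
      assume "hf_mem z (enc M)"
      then obtain a i where "z = tok a i" "i < count M a" by (auto simp: mem_enc)
      then show "hf_mem z X" using dD[of i a] by (simp add: cM c_def D_def)
    qed
  qed
  then show "\<exists>M. X = enc M" by blast
qed

definition FImp where "FImp p q = FNeg (FConj p (FNeg q))"
definition FAll where "FAll v p = FNeg (FEx v (FNeg p))"
definition FOr where "FOr p q = FNeg (FConj (FNeg p) (FNeg q))"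

lemma sat_derived[simp]:
  "hf_sat e (FImp p q) \<longleftrightarrow> (hf_sat e p \<longrightarrow> hf_sat e q)"
  "hf_sat e (FAll v p) \<longleftrightarrow> (\<forall>x. hf_sat (e(v := x)) p)"
  "hf_sat e (FOr p q) \<longleftrightarrow> (hf_sat e p \<or> hf_sat e q)"
  by (auto simp: FImp_def FAll_def FOr_def)

definition valid_fm :: "nat \<Rightarrow> hf_fm" where
  "valid_fm x = FConj (FNeg (FAt x))
    (FAll 10 (FImp (FMem 10 x)
      (FConj (FNeg (FAt 10))
      (FConj (FEx 11 (FConj (FMem 11 10) (FAt 11)))
      (FConj (FAll 11 (FAll 12 (FImp (FConj (FConj (FMem 11 10) (FAt 11)) (FConj (FMem 12 10) (FAt 12))) (FEq 11 12))))
      (FConj (FAll 13 (FAll 14 (FImp (FConj (FConj (FMem 13 10) (FNeg (FAt 13))) (FConj (FMem 14 10) (FNeg (FAt 14)))) (FEq 13 14))))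
             (FAll 13 (FImp (FConj (FMem 13 10) (FNeg (FAt 13)))
                 (FConj (FMem 13 x) (FAll 11 (FImp (FConj (FMem 11 10) (FAt 11)) (FMem 11 13))))))))))))"

lemma sat_valid_fm: "x < 10 \<Longrightarrow> hf_sat e (valid_fm x) \<longleftrightarrow> valid (e x)"
  unfolding valid_fm_def valid_def by simp

definition fenc :: "'a::linorder list \<Rightarrow> 'a hf" where "fenc xs = enc (mset xs)"
definition genc :: "'a::linorder list set \<Rightarrow> 'a hf" where "genc S = HSet (Abs_fset (fenc ` S))"

lemma inj_fenc: "inj_on fenc omega_pow"
  by (auto simp: inj_on_def fenc_def omega_pow_def dest!: enc_inj intro: cnf_mset_inj)

lemma fenc_image: "valid X \<longleftrightarrow> (\<exists>x\<in>omega_pow. X = fenc x)"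
  unfolding valid_iff fenc_def omega_pow_def
proof
  assume "\<exists>M. X = enc M"
  then obtain M where "X = enc M" by blast
  moreover obtain xs where "cnf xs" "mset xs = M" using cnf_exists by blast
  ultimately show "\<exists>x\<in>Collect cnf. X = enc (mset x)" by auto
qed auto

lemma mem_genc: "finite S \<Longrightarrow> hf_mem z (genc S) \<longleftrightarrow> z \<in> fenc ` S"
  by (simp add: genc_def Abs_fset_inverse)

lemma inj_genc: "inj_on genc {S. finite S \<and> S \<subseteq> omega_pow}"
proof (rule inj_onI)
  fix S S' assume S: "S \<in> {S. finite S \<and> S \<subseteq> omega_pow}" and S': "S' \<in> {S. finite S \<and> S \<subseteq> omega_pow}"
    and e: "genc S = genc S'"
  have "fenc ` S = fenc ` S'"
  proof -
    have "z \<in> fenc ` S \<longleftrightarrow> z \<in> fenc ` S'" for z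
      using e mem_genc[of S z] mem_genc[of S' z] S S' by simp
    then show ?thesis by blast
  qed
  then show "S = S'" using inj_on_image_eq_iff[OF inj_fenc] S S' by blast
qed

definition gsem :: "'a hf \<Rightarrow> bool" where
  "gsem X \<longleftrightarrow> \<not> hf_at X \<and> (\<forall>z. hf_mem z X \<longrightarrow> valid z)"

lemma genc_image: "gsem X \<longleftrightarrow> (\<exists>S. finite S \<and> S \<subseteq> omega_pow \<and> X = genc S)"
proof
  assume g: "gsem X"
  then obtain s where Xs: "X = HSet s" by (cases X) (auto simp: gsem_def)
  define S where "S = {x \<in> omega_pow. fenc x |\<in>| s}"
  have img: "fenc ` S = fset s"
  proof
    show "fenc ` S \<subseteq> fset s" by (auto simp: S_def)
    show "fset s \<subseteq> fenc ` S"
    proof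
      fix z assume "z \<in> fset s"
      then have "valid z" using g Xs by (simp add: gsem_def)
      then obtain x where "x \<in> omega_pow" "z = fenc x" using fenc_image by blast
      then show "z \<in> fenc ` S" using \<open>z \<in> fset s\<close> by (auto simp: S_def)
    qed
  qed
  have fS: "finite S"
  proof -
    have "inj_on fenc S" using inj_fenc by (rule inj_on_subset) (auto simp: S_def)
    then show ?thesis using img finite_imageD[of fenc S] by simp
  qed
  have "X = genc S" by (simp add: Xs genc_def img fset_inverse)
  then show "\<exists>S. finite S \<and> S \<subseteq> omega_pow \<and> X = genc S" using fS by (auto simp: S_def)
next
  assume "\<exists>S. finite S \<and> S \<subseteq> omega_pow \<and> X = genc S"
  then obtain S where S: "finite S" "S \<subseteq> omega_pow" "X = genc S" by blast
  show "gsem X" unfolding gsem_def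
  proof
    show "\<not> hf_at X" using S by (simp add: genc_def)
    show "\<forall>z. hf_mem z X \<longrightarrow> valid z" using S by (auto simp: mem_genc fenc_def valid_enc)
  qed
qed

lemma atoms_less_tok:
  "(\<exists>p q. (hf_mem p (tok b j) \<and> hf_mem q (tok a i)) \<and> hf_less q p) \<longleftrightarrow> a < b"
  by (auto simp: mem_tok hf_less_iff)

definition lessR :: "'a::ord hf \<Rightarrow> 'a hf \<Rightarrow> bool" where
  "lessR S T \<longleftrightarrow> S \<noteq> T \<and> (\<forall>z. hf_mem z S \<and> \<not> hf_mem z T \<longrightarrow>
     (\<exists>w. (hf_mem w T \<and> \<not> hf_mem w S) \<and> (\<exists>p q. (hf_mem p w \<and> hf_mem q z) \<and> hf_less q p)))"

lemma lessR_enc: "lessR (enc M) (enc N) \<longleftrightarrow> M < N"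
proof -
  have "lessR (enc M) (enc N) \<longleftrightarrow> M \<noteq> N \<and>
     (\<forall>a i. i < count M a \<and> \<not> i < count N a \<longrightarrow> (\<exists>b j. (j < count N b \<and> \<not> j < count M b) \<and> a < b))"
    unfolding lessR_def
  proof (rule conj_cong)
    show "enc M \<noteq> enc N \<longleftrightarrow> M \<noteq> N" using enc_inj by blast
  next
    assume "M \<noteq> N"
    show "(\<forall>z. hf_mem z (enc M) \<and> \<not> hf_mem z (enc N) \<longrightarrow>
     (\<exists>w. (hf_mem w (enc N) \<and> \<not> hf_mem w (enc M)) \<and> (\<exists>p q. (hf_mem p w \<and> hf_mem q z) \<and> hf_less q p)))
      \<longleftrightarrow> (\<forall>a i. i < count M a \<and> \<not> i < count N a \<longrightarrow> (\<exists>b j. (j < count N b \<and> \<not> j < count M b) \<and> a < b))"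
    proof
      assume H: "\<forall>z. hf_mem z (enc M) \<and> \<not> hf_mem z (enc N) \<longrightarrow>
        (\<exists>w. (hf_mem w (enc N) \<and> \<not> hf_mem w (enc M)) \<and> (\<exists>p q. (hf_mem p w \<and> hf_mem q z) \<and> hf_less q p))"
      show "\<forall>a i. i < count M a \<and> \<not> i < count N a \<longrightarrow> (\<exists>b j. (j < count N b \<and> \<not> j < count M b) \<and> a < b)"
      proof (intro allI impI)
        fix a i assume ai: "i < count M a \<and> \<not> i < count N a"
        then obtain w where w: "hf_mem w (enc N)" "\<not> hf_mem w (enc M)"
          and pq: "\<exists>p q. (hf_mem p w \<and> hf_mem q (tok a i)) \<and> hf_less q p"
          using H[rule_format, of "tok a i"] by auto
        from w(1) obtain b j where bj: "w = tok b j" "j < count N b" by (auto simp: mem_enc)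
        then have "\<not> j < count M b" using w(2) by simp
        moreover have "a < b" using pq bj atoms_less_tok by metis
        ultimately show "\<exists>b j. (j < count N b \<and> \<not> j < count M b) \<and> a < b" using bj by blast
      qed
    next
      assume H: "\<forall>a i. i < count M a \<and> \<not> i < count N a \<longrightarrow> (\<exists>b j. (j < count N b \<and> \<not> j < count M b) \<and> a < b)"
      show "\<forall>z. hf_mem z (enc M) \<and> \<not> hf_mem z (enc N) \<longrightarrow>
        (\<exists>w. (hf_mem w (enc N) \<and> \<not> hf_mem w (enc M)) \<and> (\<exists>p q. (hf_mem p w \<and> hf_mem q z) \<and> hf_less q p))"
      proof (intro allI impI)
        fix z assume z: "hf_mem z (enc M) \<and> \<not> hf_mem z (enc N)"
        then obtain a i where ai: "z = tok a i" "i < count M a" by (auto simp: mem_enc)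
        then have "\<not> i < count N a" using z by simp
        then obtain b j where "j < count N b" "\<not> j < count M b" "a < b" using H ai by blast
        then show "\<exists>w. (hf_mem w (enc N) \<and> \<not> hf_mem w (enc M)) \<and> (\<exists>p q. (hf_mem p w \<and> hf_mem q z) \<and> hf_less q p)"
          using ai atoms_less_tok[of b j a i] by (intro exI[of _ "tok b j"]) simp
      qed
    qed
  qed
  also have "\<dots> \<longleftrightarrow> M < N"
    unfolding less_multiset\<^sub>H\<^sub>O
  proof (rule conj_cong[OF refl])
    show "(\<forall>a i. i < count M a \<and> \<not> i < count N a \<longrightarrow> (\<exists>b j. (j < count N b \<and> \<not> j < count M b) \<and> a < b))
      \<longleftrightarrow> (\<forall>y. count N y < count M y \<longrightarrow> (\<exists>x>y. count M x < count N x))"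
    proof
      assume H: "\<forall>a i. i < count M a \<and> \<not> i < count N a \<longrightarrow> (\<exists>b j. (j < count N b \<and> \<not> j < count M b) \<and> a < b)"
      show "\<forall>y. count N y < count M y \<longrightarrow> (\<exists>x>y. count M x < count N x)"
      proof (intro allI impI)
        fix y assume "count N y < count M y"
        then obtain b j where "j < count N b" "\<not> j < count M b" "y < b" using H[THEN spec[of _ y], THEN spec[of _ "count N y"]] by auto
        then show "\<exists>x>y. count M x < count N x" by (intro exI[of _ b]) auto
      qed
    next
      assume H: "\<forall>y. count N y < count M y \<longrightarrow> (\<exists>x>y. count M x < count N x)"
      show "\<forall>a i. i < count M a \<and> \<not> i < count N a \<longrightarrow> (\<exists>b j. (j < count N b \<and> \<not> j < count M b) \<and> a < b)"
      proof (intro allI impI)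
        fix a i assume "i < count M a \<and> \<not> i < count N a"
        then have "count N a < count M a" by simp
        then obtain b where "a < b" "count M b < count N b" using H by blast
        then show "\<exists>b j. (j < count N b \<and> \<not> j < count M b) \<and> a < b" by (intro exI[of _ b] exI[of _ "count M b"]) auto
      qed
    qed
  qed
  finally show ?thesis .
qed

lemma ozero_le: "ozero \<le> (c::'a::wellorder)"
  unfolding ozero_def by (rule Least_le) simp

context
  fixes dummy :: "'a::wellorder itself"
  assumes limit: "\<forall>x::'a. \<exists>y. x < y"
begin

lemma less_osucc: "(a::'a) < osucc a"
  unfolding osucc_def using limit by (meson LeastI)

lemma osucc_le: "(a::'a) < c \<Longrightarrow> osucc a \<le> c"
  unfolding osucc_def by (rule Least_le)

lemma osucc_le_iff: "osucc (a::'a) \<le> c \<longleftrightarrow> a < c"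
  using less_osucc osucc_le less_le_trans by blast

end

definition psiM :: "'a::wellorder multiset \<Rightarrow> 'a multiset" where
  "psiM M = (if M = {#} then {#osucc ozero#}
     else add_mset (osucc (Min (set_mset M))) (filter_mset (\<lambda>b. Min (set_mset M) < b) M))"

lemma cnf_last_min: "cnf xs \<Longrightarrow> xs \<noteq> [] \<Longrightarrow> last xs = Min (set xs)"
proof -
  assume c: "cnf xs" and ne: "xs \<noteq> []"
  have "\<forall>x\<in>set xs. last xs \<le> x"
  proof
    fix x assume "x \<in> set xs"
    then obtain i where i: "i < length xs" "x = xs ! i" by (auto simp: in_set_conv_nth)
    show "last xs \<le> x"
    proof (cases "i = length xs - 1")
      case True then show ?thesis using i ne by (simp add: last_conv_nth)
    next
      case False
      then have "i < length xs - 1" using i by simp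
      then show ?thesis using c i ne unfolding cnf_def
        by (simp add: sorted_wrt_iff_nth_less last_conv_nth)
    qed
  qed
  then show ?thesis using ne by (intro Min_eqI[symmetric]) auto
qed

lemma mset_psi:
  assumes limit: "\<forall>x::'a::wellorder. \<exists>y. x < y" and c: "cnf (xs::'a list)"
  shows "mset (psi xs) = psiM (mset xs)"
proof (cases "xs = []")
  case True then show ?thesis by (simp add: psi_def psiM_def)
next
  case False
  define m where "m = last xs"
  have mmin: "Min (set_mset (mset xs)) = m" using cnf_last_min[OF c False] by (simp add: m_def)
  have xs: "xs = butlast xs @ [m]" using False by (simp add: m_def)
  have "filter (\<lambda>c. osucc m \<le> c) (butlast xs) = filter (\<lambda>c. m < c) (butlast xs)"
    using osucc_le_iff[OF limit] by simp
  moreover have "filter_mset (\<lambda>b. m < b) (mset xs) = mset (filter (\<lambda>c. m < c) (butlast xs))"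
    by (subst xs) simp
  ultimately show ?thesis using False
    by (simp add: psi_def psiM_def cnf_last_min[OF c False, symmetric] cnf_plus_def m_def)
qed

lemma core:
  fixes a0 s0 :: "'a::linorder"
  assumes as: "a0 < s0" and sl: "\<forall>d. a0 < d \<longrightarrow> s0 \<le> d" and am: "\<forall>b. 0 < count M b \<longrightarrow> a0 \<le> b"
  shows "((\<forall>b i. i < count M b \<and> a0 < b \<longrightarrow> i < count N b) \<and>
          (\<forall>b i. i < count N b \<and> i < count M b \<longrightarrow> a0 < b) \<and>
          (\<forall>b i. i < count N b \<and> \<not> i < count M b \<longrightarrow> s0 = b) \<and>
          (\<exists>b i. (i < count N b \<and> \<not> i < count M b) \<and> s0 = b) \<and>
          (\<forall>b i. (i < count N b \<and> \<not> i < count M b) \<and> 0 < i \<longrightarrow> i - 1 < count M b))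
     \<longleftrightarrow> N = add_mset s0 (filter_mset (\<lambda>b. a0 < b) M)"
  (is "?L \<longleftrightarrow> ?R")
proof
  assume L: ?L
  show ?R
  proof (rule multiset_eqI)
    fix b
    have A: "\<And>i. i < count M b \<Longrightarrow> a0 < b \<Longrightarrow> i < count N b" using L by blast
    have D: "\<And>i. i < count N b \<Longrightarrow> i < count M b \<Longrightarrow> a0 < b" using L by blast
    have B1: "\<And>i. i < count N b \<Longrightarrow> \<not> i < count M b \<Longrightarrow> s0 = b" using L by blast
    have B2: "\<exists>i. i < count N s0 \<and> \<not> i < count M s0" using L by blast
    have B3: "\<And>i. i < count N b \<Longrightarrow> \<not> i < count M b \<Longrightarrow> 0 < i \<Longrightarrow> i - 1 < count M b" using L by blast
    show "count N b = count (add_mset s0 (filter_mset (\<lambda>b. a0 < b) M)) b"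
    proof (cases "a0 < b")
      case False
      then have "b \<noteq> s0" using as by auto
      then have le: "count N b \<le> count M b" using B1[of "count M b"] by (cases "count N b \<le> count M b") auto
      have "count N b = 0"
      proof (rule ccontr)
        assume "count N b \<noteq> 0"
        then have "0 < count N b" "0 < count M b" using le by (simp_all del: count_greater_zero_iff)
        then show False using D False by blast
      qed
      then show ?thesis using False \<open>b \<noteq> s0\<close> by simp
    next
      case True
      have ge: "count M b \<le> count N b" using A[of "count N b"] True by (cases "count M b \<le> count N b") auto
      show ?thesis
      proof (cases "b = s0")
        case False
        then have "count N b \<le> count M b" using B1[of "count M b"] by (cases "count N b \<le> count M b") auto
        then show ?thesis using ge False True by simp
      next
        case True2: True
        have gt: "count M b < count N b" using B2 True2 by auto
        have "count N b \<le> Suc (count M b)"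
        proof (rule ccontr)
          assume h: "\<not> count N b \<le> Suc (count M b)"
          then show False using B3[of "count N b - 1"] gt by (cases "count N b") auto
        qed
        then show ?thesis using gt True True2 by simp
      qed
    qed
  qed
next
  assume R: ?R
  have cN: "count N b = (if a0 < b then count M b else 0) + (if b = s0 then 1 else 0)" for b
    using R by simp
  show ?L
  proof (intro conjI allI impI)
    fix b i assume "i < count M b \<and> a0 < b" then show "i < count N b" using cN[of b] by simp
  next
    fix b i assume h: "i < count N b \<and> i < count M b"
    show "a0 < b"
    proof (rule ccontr)
      assume n: "\<not> a0 < b"
      then have "b \<noteq> s0" using as by auto
      then have "count N b = 0" using cN[of b] n by simp
      then show False using h by simp
    qed
  next
    fix b i assume h: "i < count N b \<and> \<not> i < count M b"
    show "s0 = b"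
    proof (rule ccontr)
      assume "s0 \<noteq> b"
      then have "count N b \<le> count M b" using cN[of b] by auto
      then show False using h by simp
    qed
  next
    show "\<exists>b i. (i < count N b \<and> \<not> i < count M b) \<and> s0 = b"
      using cN[of s0] as by (intro exI[of _ s0] exI[of _ "count M s0"]) simp
  next
    fix b i assume h: "(i < count N b \<and> \<not> i < count M b) \<and> 0 < i"
    have "count N b \<le> Suc (count M b)" using cN[of b] by auto
    then show "i - 1 < count M b" using h by linarith
  qed
qed

lemma all_enc: "(\<forall>z. hf_mem z (enc M) \<longrightarrow> P z) \<longleftrightarrow> (\<forall>b i. i < count M b \<longrightarrow> P (tok b i))"
  by (auto simp: mem_enc)
lemma ex_enc: "(\<exists>z. hf_mem z (enc M) \<and> P z) \<longleftrightarrow> (\<exists>b i. i < count M b \<and> P (tok b i))"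
  by (auto simp: mem_enc)
lemma h1: "(\<exists>q. hf_mem q (tok b i) \<and> hf_less (Atom a0) q) \<longleftrightarrow> a0 < b"
  by (auto simp: mem_tok hf_less_iff)
lemma h2: "hf_mem (Atom s0) (tok b i) \<longleftrightarrow> s0 = b"
  by (auto simp: mem_tok)
lemma h3: "(\<forall>u. hf_mem u (tok b i) \<longrightarrow> \<not> hf_at u \<longrightarrow> P u) \<longleftrightarrow> (0 < i \<longrightarrow> P (tok b (i - 1)))"
  by (auto simp: mem_tok)
lemma h4: "(\<forall>u. hf_mem u (tok b i) \<longrightarrow> hf_at u) \<longleftrightarrow> i = 0"
  by (auto simp: mem_tok)
lemma h5: "(\<forall>q. hf_mem q (tok b i) \<longrightarrow> \<not> hf_less q (Atom a)) \<longleftrightarrow> \<not> b < a"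
  by (auto simp: mem_tok hf_less_iff)

definition zeroat :: "'a::ord hf \<Rightarrow> bool" where
  "zeroat z0 \<longleftrightarrow> hf_at z0 \<and> (\<forall>c. hf_at c \<longrightarrow> \<not> hf_less c z0)"
definition succat :: "'a::ord hf \<Rightarrow> 'a hf \<Rightarrow> bool" where
  "succat m s \<longleftrightarrow> hf_at s \<and> (hf_less m s \<and> (\<forall>c. hf_less m c \<longrightarrow> \<not> hf_less c s))"
definition minat :: "'a::ord hf \<Rightarrow> 'a hf \<Rightarrow> bool" where
  "minat S m \<longleftrightarrow> hf_at m \<and> ((\<exists>z. hf_mem z S \<and> hf_mem m z) \<and>
     (\<forall>z. hf_mem z S \<longrightarrow> (\<forall>q. hf_mem q z \<longrightarrow> \<not> hf_less q m)))"

definition psiE :: "'a::ord hf \<Rightarrow> 'a hf \<Rightarrow> bool" where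
  "psiE S T \<longleftrightarrow> (\<forall>z. \<not> hf_mem z S) \<and> (\<exists>z0 s1. zeroat z0 \<and> (succat z0 s1 \<and>
     ((\<forall>z. hf_mem z T \<longrightarrow> hf_mem s1 z) \<and> ((\<exists>z. hf_mem z T) \<and>
      (\<forall>z. hf_mem z T \<longrightarrow> (\<forall>u. hf_mem u z \<longrightarrow> hf_at u))))))"

definition psiN :: "'a::ord hf \<Rightarrow> 'a hf \<Rightarrow> bool" where
  "psiN S T \<longleftrightarrow> (\<exists>m s. minat S m \<and> (succat m s \<and>
     ((\<forall>z. hf_mem z S \<longrightarrow> (\<exists>q. hf_mem q z \<and> hf_less m q) \<longrightarrow> hf_mem z T) \<and>
     ((\<forall>z. hf_mem z T \<longrightarrow> hf_mem z S \<longrightarrow> (\<exists>q. hf_mem q z \<and> hf_less m q)) \<and>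
     ((\<forall>z. hf_mem z T \<longrightarrow> \<not> hf_mem z S \<longrightarrow> hf_mem s z) \<and>
     ((\<exists>z. hf_mem z T \<and> (\<not> hf_mem z S \<and> hf_mem s z)) \<and>
      (\<forall>z. hf_mem z T \<longrightarrow> \<not> hf_mem z S \<longrightarrow> (\<forall>u. hf_mem u z \<longrightarrow> \<not> hf_at u \<longrightarrow> hf_mem u S))))))))"

lemma zeroat_iff: "zeroat z \<longleftrightarrow> z = Atom (ozero::'a::wellorder)"
proof
  assume "zeroat z"
  then obtain a where a: "z = Atom a" "\<forall>b. \<not> b < a" by (auto simp: zeroat_def hf_at_iff hf_less_iff)
  then show "z = Atom ozero" using ozero_le[of a] by (metis order.order_iff_strict)
qed (auto simp: zeroat_def hf_at_iff hf_less_iff not_less ozero_le)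

lemma succat_iff:
  assumes limit: "\<forall>x::'a::wellorder. \<exists>y. x < y"
  shows "succat (Atom (a::'a)) s \<longleftrightarrow> s = Atom (osucc a)"
proof
  assume "succat (Atom a) s"
  then obtain c where c: "s = Atom c" "a < c" "\<forall>d. a < d \<longrightarrow> \<not> d < c" by (auto simp: succat_def hf_at_iff hf_less_iff)
  have "osucc a \<le> c" using osucc_le[OF limit c(2)] .
  moreover have "\<not> osucc a < c" using c(3) less_osucc[OF limit] by blast
  ultimately show "s = Atom (osucc a)" using c(1) by simp
next
  assume "s = Atom (osucc a)"
  then show "succat (Atom a) s"
    using less_osucc[OF limit] osucc_le[OF limit] by (auto simp: succat_def hf_less_iff not_less)
qed

lemma minat_atom: "minat (enc M) (Atom a) \<longleftrightarrow> (\<exists>b i. i < count M b \<and> a = b) \<and> (\<forall>b i. i < count M b \<longrightarrow> \<not> b < a)"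
  unfolding minat_def ex_enc all_enc h2 h5 by simp

lemma ex_lt_count: "(\<exists>i. i < count M b) \<longleftrightarrow> b \<in># M"
proof
  assume "\<exists>i. i < count M b"
  then obtain i where "i < count M b" by blast
  then have "0 < count M b" by (rule le_less_trans[OF le0])
  then show "b \<in># M" by (simp only: count_greater_zero_iff)
next
  assume "b \<in># M" then show "\<exists>i. i < count M b" by (intro exI[of _ 0]) simp
qed

lemma minat_enc: "minat (enc M) m \<longleftrightarrow> M \<noteq> {#} \<and> m = Atom (Min (set_mset (M::'a::linorder multiset)))"
proof -
  have "minat (enc M) m \<longleftrightarrow> (\<exists>a. m = Atom a \<and> (\<exists>b i. i < count M b \<and> a = b) \<and> (\<forall>b i. i < count M b \<longrightarrow> \<not> b < a))"
    by (cases m) (simp add: minat_atom, simp add: minat_def)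
  also have "\<dots> \<longleftrightarrow> (\<exists>a. m = Atom a \<and> a \<in># M \<and> (\<forall>b\<in>#M. \<not> b < a))"
    by (simp add: ex_lt_count) (metis ex_lt_count)
  also have "\<dots> \<longleftrightarrow> M \<noteq> {#} \<and> m = Atom (Min (set_mset M))"
  proof
    assume "\<exists>a. m = Atom a \<and> a \<in># M \<and> (\<forall>b\<in>#M. \<not> b < a)"
    then obtain a where a: "m = Atom a" "a \<in># M" "\<forall>b\<in>#M. \<not> b < a" by blast
    have "Min (set_mset M) = a" using a by (intro Min_eqI) (auto simp: not_less)
    then show "M \<noteq> {#} \<and> m = Atom (Min (set_mset M))" using a by auto
  next
    assume h: "M \<noteq> {#} \<and> m = Atom (Min (set_mset M))"
    then have "set_mset M \<noteq> {}" by simp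
    then show "\<exists>a. m = Atom a \<and> a \<in># M \<and> (\<forall>b\<in>#M. \<not> b < a)" using h
      by (intro exI[of _ "Min (set_mset M)"]) (auto simp: not_less)
  qed
  finally show ?thesis .
qed

lemma enc_empty_iff: "(\<forall>z. \<not> hf_mem z (enc M)) \<longleftrightarrow> M = {#}"
proof -
  have "(\<forall>z. \<not> hf_mem z (enc M)) \<longleftrightarrow> (\<forall>b i. \<not> i < count M b)" using all_enc[of M "\<lambda>_. False"] by simp
  also have "\<dots> \<longleftrightarrow> M = {#}" by (metis count_empty multiset_eqI not_less_zero zero_less_iff_neq_zero)
  finally show ?thesis .
qed

lemma core2:
  fixes a0 s0 :: "'a::linorder"
  assumes as: "a0 < s0" and sl: "\<forall>d. a0 < d \<longrightarrow> s0 \<le> d" and am: "\<forall>b. 0 < count M b \<longrightarrow> a0 \<le> b"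
  shows "((\<forall>b i. i < count M b \<longrightarrow> a0 < b \<longrightarrow> i < count N b) \<and>
          ((\<forall>b i. i < count N b \<longrightarrow> i < count M b \<longrightarrow> a0 < b) \<and>
          ((\<forall>b i. i < count N b \<longrightarrow> \<not> i < count M b \<longrightarrow> s0 = b) \<and>
          ((\<exists>b i. i < count N b \<and> (\<not> i < count M b \<and> s0 = b)) \<and>
          (\<forall>b i. i < count N b \<longrightarrow> \<not> i < count M b \<longrightarrow> 0 < i \<longrightarrow> i - 1 < count M b)))))
     \<longleftrightarrow> N = add_mset s0 (filter_mset (\<lambda>b. a0 < b) M)"
proof -
  have e: "((\<forall>b i. i < count M b \<longrightarrow> a0 < b \<longrightarrow> i < count N b) \<and>
          ((\<forall>b i. i < count N b \<longrightarrow> i < count M b \<longrightarrow> a0 < b) \<and>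
          ((\<forall>b i. i < count N b \<longrightarrow> \<not> i < count M b \<longrightarrow> s0 = b) \<and>
          ((\<exists>b i. i < count N b \<and> (\<not> i < count M b \<and> s0 = b)) \<and>
          (\<forall>b i. i < count N b \<longrightarrow> \<not> i < count M b \<longrightarrow> 0 < i \<longrightarrow> i - 1 < count M b))))) \<longleftrightarrow>
        ((\<forall>b i. i < count M b \<and> a0 < b \<longrightarrow> i < count N b) \<and>
          (\<forall>b i. i < count N b \<and> i < count M b \<longrightarrow> a0 < b) \<and>
          (\<forall>b i. i < count N b \<and> \<not> i < count M b \<longrightarrow> s0 = b) \<and>
          (\<exists>b i. (i < count N b \<and> \<not> i < count M b) \<and> s0 = b) \<and>
          (\<forall>b i. (i < count N b \<and> \<not> i < count M b) \<and> 0 < i \<longrightarrow> i - 1 < count M b))"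
    by blast
  show ?thesis unfolding e by (rule core[OF as sl am])
qed

lemma psiN_enc:
  assumes limit: "\<forall>x::'a::wellorder. \<exists>y. x < y"
  shows "psiN (enc M) (enc (N::'a multiset)) \<longleftrightarrow> M \<noteq> {#} \<and> N = psiM M"
proof -
  define a0 where "a0 = Min (set_mset M)"
  define s0 where "s0 = osucc a0"
  have "psiN (enc M) (enc N) \<longleftrightarrow> M \<noteq> {#} \<and>
     ((\<forall>z. hf_mem z (enc M) \<longrightarrow> (\<exists>q. hf_mem q z \<and> hf_less (Atom a0) q) \<longrightarrow> hf_mem z (enc N)) \<and>
     ((\<forall>z. hf_mem z (enc N) \<longrightarrow> hf_mem z (enc M) \<longrightarrow> (\<exists>q. hf_mem q z \<and> hf_less (Atom a0) q)) \<and>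
     ((\<forall>z. hf_mem z (enc N) \<longrightarrow> \<not> hf_mem z (enc M) \<longrightarrow> hf_mem (Atom s0) z) \<and>
     ((\<exists>z. hf_mem z (enc N) \<and> (\<not> hf_mem z (enc M) \<and> hf_mem (Atom s0) z)) \<and>
      (\<forall>z. hf_mem z (enc N) \<longrightarrow> \<not> hf_mem z (enc M) \<longrightarrow> (\<forall>u. hf_mem u z \<longrightarrow> \<not> hf_at u \<longrightarrow> hf_mem u (enc M)))))))"
    unfolding psiN_def minat_enc a0_def s0_def by (simp add: succat_iff[OF limit])
  also have "\<dots> \<longleftrightarrow> M \<noteq> {#} \<and>
         ((\<forall>b i. i < count M b \<longrightarrow> a0 < b \<longrightarrow> i < count N b) \<and>
          ((\<forall>b i. i < count N b \<longrightarrow> i < count M b \<longrightarrow> a0 < b) \<and>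
          ((\<forall>b i. i < count N b \<longrightarrow> \<not> i < count M b \<longrightarrow> s0 = b) \<and>
          ((\<exists>b i. i < count N b \<and> (\<not> i < count M b \<and> s0 = b)) \<and>
          (\<forall>b i. i < count N b \<longrightarrow> \<not> i < count M b \<longrightarrow> 0 < i \<longrightarrow> i - 1 < count M b)))))"
    by (simp only: all_enc ex_enc h1 h2 h3 tok_mem_enc)
  also have "\<dots> \<longleftrightarrow> M \<noteq> {#} \<and> N = psiM M"
  proof (cases "M = {#}")
    case True then show ?thesis by simp
  next
    case False
    have as: "a0 < s0" using less_osucc[OF limit] by (simp add: s0_def)
    have sl: "\<forall>d. a0 < d \<longrightarrow> s0 \<le> d" using osucc_le[OF limit] by (simp add: s0_def)
    have am: "\<forall>b. 0 < count M b \<longrightarrow> a0 \<le> b" by (simp add: a0_def)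
    have pm: "psiM M = add_mset s0 (filter_mset (\<lambda>b. a0 < b) M)" using False by (simp add: psiM_def a0_def s0_def)
    have c: "((\<forall>b i. i < count M b \<longrightarrow> a0 < b \<longrightarrow> i < count N b) \<and>
          ((\<forall>b i. i < count N b \<longrightarrow> i < count M b \<longrightarrow> a0 < b) \<and>
          ((\<forall>b i. i < count N b \<longrightarrow> \<not> i < count M b \<longrightarrow> s0 = b) \<and>
          ((\<exists>b i. i < count N b \<and> (\<not> i < count M b \<and> s0 = b)) \<and>
          (\<forall>b i. i < count N b \<longrightarrow> \<not> i < count M b \<longrightarrow> 0 < i \<longrightarrow> i - 1 < count M b)))))
       \<longleftrightarrow> N = psiM M" unfolding pm by (rule core2[OF as sl am])
    show ?thesis by (subst c) (rule refl)
  qed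
  finally show ?thesis .
qed

lemma psiE_enc:
  assumes limit: "\<forall>x::'a::wellorder. \<exists>y. x < y"
  shows "psiE (enc M) (enc (N::'a multiset)) \<longleftrightarrow> M = {#} \<and> N = psiM M"
proof -
  define s1 where "s1 = osucc (ozero::'a)"
  have "psiE (enc M) (enc N) \<longleftrightarrow> M = {#} \<and>
     ((\<forall>z. hf_mem z (enc N) \<longrightarrow> hf_mem (Atom s1) z) \<and> ((\<exists>z. hf_mem z (enc N)) \<and>
      (\<forall>z. hf_mem z (enc N) \<longrightarrow> (\<forall>u. hf_mem u z \<longrightarrow> hf_at u))))"
    unfolding psiE_def zeroat_iff enc_empty_iff s1_def by (simp add: succat_iff[OF limit])
  also have "\<dots> \<longleftrightarrow> M = {#} \<and> ((\<forall>b i. i < count N b \<longrightarrow> s1 = b) \<and> ((\<exists>b i. i < count N b) \<and>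
      (\<forall>b i. i < count N b \<longrightarrow> i = 0)))"
    using ex_enc[of N "\<lambda>_. True", simplified] by (simp only: all_enc h2 h4)
  also have "\<dots> \<longleftrightarrow> M = {#} \<and> N = {#s1#}"
  proof -
    have "((\<forall>b i. i < count N b \<longrightarrow> s1 = b) \<and> ((\<exists>b i. i < count N b) \<and>
      (\<forall>b i. i < count N b \<longrightarrow> i = 0))) \<longleftrightarrow> N = {#s1#}"
    proof
      assume h: "(\<forall>b i. i < count N b \<longrightarrow> s1 = b) \<and> ((\<exists>b i. i < count N b) \<and>
        (\<forall>b i. i < count N b \<longrightarrow> i = 0))"
      show "N = {#s1#}"
      proof (rule multiset_eqI)
        fix b
        have le1: "count N b \<le> 1" using h[THEN conjunct2, THEN conjunct2, rule_format, of "count N b - 1" b]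
          by (cases "count N b") auto
        show "count N b = count {#s1#} b"
        proof (cases "b = s1")
          case True
          obtain c i where "i < count N c" using h by blast
          then have "c = s1" using h by blast
          then show ?thesis using le1 True \<open>i < count N c\<close> by simp
        next
          case False
          then have "count N b = 0" using h[THEN conjunct1, rule_format, of 0 b] by (cases "count N b") auto
          then show ?thesis using False by simp
        qed
      qed
    next
      assume "N = {#s1#}"
      then show "(\<forall>b i. i < count N b \<longrightarrow> s1 = b) \<and> ((\<exists>b i. i < count N b) \<and>
        (\<forall>b i. i < count N b \<longrightarrow> i = 0))" by auto
    qed
    then show ?thesis by blast
  qed
  also have "\<dots> \<longleftrightarrow> M = {#} \<and> N = psiM M" by (auto simp: psiM_def s1_def)
  finally show ?thesis .
qed

definition g_fm :: "nat \<Rightarrow> hf_fm" where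
  "g_fm x = FConj (FNeg (FAt x)) (FAll 2 (FImp (FMem 2 x) (valid_fm 2)))"

lemma sat_g_fm: "x < 2 \<Longrightarrow> hf_sat e (g_fm x) \<longleftrightarrow> gsem (e x)"
  unfolding g_fm_def gsem_def by (simp add: sat_valid_fm)

definition less_fm :: hf_fm where
  "less_fm = FConj (valid_fm 0) (FConj (valid_fm 1) (FConj (FNeg (FEq 0 1))
     (FAll 2 (FImp (FConj (FMem 2 0) (FNeg (FMem 2 1)))
       (FEx 3 (FConj (FConj (FMem 3 1) (FNeg (FMem 3 0)))
          (FEx 4 (FEx 5 (FConj (FConj (FMem 4 3) (FMem 5 2)) (FLess 5 4))))))))))"

lemma sat_less_fm: "hf_sat e less_fm \<longleftrightarrow> valid (e 0) \<and> valid (e 1) \<and> lessR (e 0) (e 1)"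
  unfolding less_fm_def lessR_def by (simp add: sat_valid_fm)

definition mem_fm :: hf_fm where
  "mem_fm = FConj (valid_fm 0) (FConj (g_fm 1) (FMem 0 1))"

lemma sat_mem_fm: "hf_sat e mem_fm \<longleftrightarrow> valid (e 0) \<and> gsem (e 1) \<and> hf_mem (e 0) (e 1)"
  unfolding mem_fm_def by (simp add: sat_valid_fm sat_g_fm)

definition zeroat_fm where "zeroat_fm = FConj (FAt 3) (FAll 5 (FImp (FAt 5) (FNeg (FLess 5 3))))"
definition succat_fm where "succat_fm = FConj (FAt 4) (FConj (FLess 3 4) (FAll 5 (FImp (FLess 3 5) (FNeg (FLess 5 4)))))"
definition minat_fm where "minat_fm = FConj (FAt 3) (FConj (FEx 2 (FConj (FMem 2 0) (FMem 3 2)))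
   (FAll 2 (FImp (FMem 2 0) (FAll 6 (FImp (FMem 6 2) (FNeg (FLess 6 3)))))))"

lemma sat_zeroat_fm: "hf_sat e zeroat_fm \<longleftrightarrow> zeroat (e 3)"
  unfolding zeroat_fm_def zeroat_def by simp
lemma sat_succat_fm: "hf_sat e succat_fm \<longleftrightarrow> succat (e 3) (e 4)"
  unfolding succat_fm_def succat_def by simp
lemma sat_minat_fm: "hf_sat e minat_fm \<longleftrightarrow> minat (e 0) (e 3)"
  unfolding minat_fm_def minat_def by simp

definition E_fm where "E_fm = FConj (FAll 2 (FNeg (FMem 2 0))) (FEx 3 (FEx 4 (FConj zeroat_fm (FConj succat_fm
   (FConj (FAll 2 (FImp (FMem 2 1) (FMem 4 2))) (FConj (FEx 2 (FMem 2 1))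
     (FAll 2 (FImp (FMem 2 1) (FAll 6 (FImp (FMem 6 2) (FAt 6)))))))))))"

definition N_fm where "N_fm = FEx 3 (FEx 4 (FConj minat_fm (FConj succat_fm
  (FConj (FAll 2 (FImp (FMem 2 0) (FImp (FEx 6 (FConj (FMem 6 2) (FLess 3 6))) (FMem 2 1))))
  (FConj (FAll 2 (FImp (FMem 2 1) (FImp (FMem 2 0) (FEx 6 (FConj (FMem 6 2) (FLess 3 6))))))
  (FConj (FAll 2 (FImp (FMem 2 1) (FImp (FNeg (FMem 2 0)) (FMem 4 2))))
  (FConj (FEx 2 (FConj (FMem 2 1) (FConj (FNeg (FMem 2 0)) (FMem 4 2))))
         (FAll 2 (FImp (FMem 2 1) (FImp (FNeg (FMem 2 0)) (FAll 6 (FImp (FMem 6 2) (FImp (FNeg (FAt 6)) (FMem 6 0))))))))))))))"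

lemma sat_E_fm: "hf_sat e E_fm \<longleftrightarrow> psiE (e 0) (e 1)"
  unfolding E_fm_def psiE_def by (simp add: sat_zeroat_fm sat_succat_fm)

lemma sat_N_fm: "hf_sat e N_fm \<longleftrightarrow> psiN (e 0) (e 1)"
  unfolding N_fm_def psiN_def by (simp add: sat_minat_fm sat_succat_fm)

definition psi_fm where "psi_fm = FConj (valid_fm 0) (FConj (valid_fm 1) (FOr E_fm N_fm))"

lemma sat_psi_fm: "hf_sat e psi_fm \<longleftrightarrow> valid (e 0) \<and> valid (e 1) \<and> (psiE (e 0) (e 1) \<or> psiN (e 0) (e 1))"
  unfolding psi_fm_def by (simp add: sat_valid_fm sat_E_fm sat_N_fm)

theorem lemma15:
  assumes limit: "\<forall>x::'a::wellorder. \<exists>y. x < y"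
  shows "WS_psi_interpretable_in_HF TYPE('a)"
  unfolding WS_psi_interpretable_in_HF_def
proof (intro exI[of _ "fenc :: 'a list \<Rightarrow> 'a hf"] exI[of _ "genc :: 'a list set \<Rightarrow> 'a hf"] conjI)
  show "inj_on (fenc :: 'a list \<Rightarrow> 'a hf) omega_pow" by (rule inj_fenc)
  show "inj_on (genc :: 'a list set \<Rightarrow> 'a hf) {S. finite S \<and> S \<subseteq> omega_pow}" by (rule inj_genc)
  show "hf_definable 1 {[fenc x :: 'a hf] | x. x \<in> omega_pow}"
    unfolding hf_definable_def
    by (rule exI[of _ "valid_fm 0"]) (auto simp: sat_valid_fm fenc_image)
  show "hf_definable 1 {[genc S :: 'a hf] | S. finite S \<and> S \<subseteq> omega_pow}"
    unfolding hf_definable_def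
    by (rule exI[of _ "g_fm 0"]) (auto simp: sat_g_fm genc_image)
  show "hf_definable 2 {[fenc x :: 'a hf, fenc y] | x y. x \<in> omega_pow \<and> y \<in> omega_pow \<and> cnf_less x y}"
    unfolding hf_definable_def
  proof (rule exI[of _ less_fm], rule allI)
    fix e :: "nat \<Rightarrow> 'a hf"
    have "hf_sat e less_fm \<longleftrightarrow> (\<exists>x y. e 0 = fenc x \<and> e 1 = fenc y \<and> x \<in> omega_pow \<and> y \<in> omega_pow \<and> cnf_less x y)"
    proof
      assume "hf_sat e less_fm"
      then have v: "valid (e 0)" "valid (e 1)" and l: "lessR (e 0) (e 1)" by (auto simp: sat_less_fm)
      obtain x y where "x \<in> omega_pow" "y \<in> omega_pow" "e 0 = fenc x" "e 1 = fenc y" using v fenc_image by metis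
      moreover have "cnf_less x y" using l calculation
        by (simp add: fenc_def lessR_enc cnf_less_iff omega_pow_def)
      ultimately show "\<exists>x y. e 0 = fenc x \<and> e 1 = fenc y \<and> x \<in> omega_pow \<and> y \<in> omega_pow \<and> cnf_less x y" by blast
    next
      assume "\<exists>x y. e 0 = fenc x \<and> e 1 = fenc y \<and> x \<in> omega_pow \<and> y \<in> omega_pow \<and> cnf_less x y"
      then obtain x y where h: "e 0 = fenc x" "e 1 = fenc y" "x \<in> omega_pow" "y \<in> omega_pow" "cnf_less x y" by blast
      then show "hf_sat e less_fm"
        by (auto simp: sat_less_fm fenc_def valid_enc lessR_enc cnf_less_iff omega_pow_def)
    qed
    then show "hf_sat e less_fm = (map e [0..<2] \<in> {[fenc x, fenc y] | x y. x \<in> omega_pow \<and> y \<in> omega_pow \<and> cnf_less x y})"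
      by (simp add: numeral_2_eq_2)
  qed
  show "hf_definable 2 {[fenc x :: 'a hf, fenc (psi x)] | x. x \<in> omega_pow}"
    unfolding hf_definable_def
  proof (rule exI[of _ psi_fm], rule allI)
    fix e :: "nat \<Rightarrow> 'a hf"
    have "hf_sat e psi_fm \<longleftrightarrow> (\<exists>x. e 0 = fenc x \<and> e 1 = fenc (psi x) \<and> x \<in> omega_pow)"
    proof
      assume "hf_sat e psi_fm"
      then have v: "valid (e 0)" "valid (e 1)" and l: "psiE (e 0) (e 1) \<or> psiN (e 0) (e 1)" by (auto simp: sat_psi_fm)
      obtain x where x: "x \<in> omega_pow" "e 0 = fenc x" using v fenc_image by metis
      obtain N where N: "e 1 = enc N" using v valid_iff by metis
      have "N = psiM (mset x)" using l x N
        by (auto simp: fenc_def psiE_enc[OF limit] psiN_enc[OF limit])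
      then have "e 1 = fenc (psi x)" using N x mset_psi[OF limit] by (simp add: fenc_def omega_pow_def)
      then show "\<exists>x. e 0 = fenc x \<and> e 1 = fenc (psi x) \<and> x \<in> omega_pow" using x by blast
    next
      assume "\<exists>x. e 0 = fenc x \<and> e 1 = fenc (psi x) \<and> x \<in> omega_pow"
      then obtain x where h: "e 0 = fenc x" "e 1 = fenc (psi x)" "x \<in> omega_pow" by blast
      then have e1: "e 1 = enc (psiM (mset x))" using mset_psi[OF limit] by (simp add: fenc_def omega_pow_def)
      have "psiE (e 0) (e 1) \<or> psiN (e 0) (e 1)"
        using h(1) e1 by (cases "mset x = {#}") (simp_all add: fenc_def psiE_enc[OF limit] psiN_enc[OF limit])
      then show "hf_sat e psi_fm" using h e1 by (simp add: sat_psi_fm fenc_def valid_enc)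
    qed
    then show "hf_sat e psi_fm = (map e [0..<2] \<in> {[fenc x, fenc (psi x)] | x. x \<in> omega_pow})"
      by (simp add: numeral_2_eq_2)
  qed
  show "hf_definable 2 {[fenc x :: 'a hf, genc S] | x S. finite S \<and> S \<subseteq> omega_pow \<and> x \<in> S}"
    unfolding hf_definable_def
  proof (rule exI[of _ mem_fm], rule allI)
    fix e :: "nat \<Rightarrow> 'a hf"
    have "hf_sat e mem_fm \<longleftrightarrow> (\<exists>x S. e 0 = fenc x \<and> e 1 = genc S \<and> finite S \<and> S \<subseteq> omega_pow \<and> x \<in> S)"
    proof
      assume "hf_sat e mem_fm"
      then have v: "valid (e 0)" "gsem (e 1)" and m: "hf_mem (e 0) (e 1)" by (auto simp: sat_mem_fm)
      obtain x where x: "x \<in> omega_pow" "e 0 = fenc x" using v fenc_image by metis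
      obtain S where S: "finite S" "S \<subseteq> omega_pow" "e 1 = genc S" using v genc_image by metis
      then obtain x' where x': "x' \<in> S" "fenc x' = fenc x" using m x mem_genc by (metis imageE)
      then have "x' = x" using inj_fenc x S by (meson inj_onD subsetD)
      then show "\<exists>x S. e 0 = fenc x \<and> e 1 = genc S \<and> finite S \<and> S \<subseteq> omega_pow \<and> x \<in> S"
        using x S x' by blast
    next
      assume "\<exists>x S. e 0 = fenc x \<and> e 1 = genc S \<and> finite S \<and> S \<subseteq> omega_pow \<and> x \<in> S"
      then obtain x S where h: "e 0 = fenc x" "e 1 = genc S" "finite S" "S \<subseteq> omega_pow" "x \<in> S" by blast
      have "gsem (e 1)" using h genc_image by blast
      moreover have "valid (e 0)" using h by (simp add: fenc_def valid_enc)
      moreover have "hf_mem (e 0) (e 1)" using h by (simp add: mem_genc)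
      ultimately show "hf_sat e mem_fm" by (simp add: sat_mem_fm)
    qed
    then show "hf_sat e mem_fm = (map e [0..<2] \<in> {[fenc x, genc S] | x S. finite S \<and> S \<subseteq> omega_pow \<and> x \<in> S})"
      by (simp add: numeral_2_eq_2)
  qed
qed

end
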